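(* For each $n\ge1$, the number of acyclic orientations of $\Sigma_n$ equals $H_n(2,0)=H_{2,n}(2,0)+3N_n(2,0)+M_n(2,0)$, and $$H_{n+1}(2,0)=(2H_n(2,0))^3-2\left(H_{2,n}(2,0)+N_n(2,0)\right)^3,$$ where, writing $H_2,N,M$ for $H_{2,n}(2,0),N_n(2,0),M_n(2,0)$, $$H_{2,n+1}(2,0)=2H_2^3+12H_2^2N+6H_2N^2,$$ $$N_{n+1}(2,0)=H_2^3+11H_2^2N+4H_2^2M+28H_2N^2+8H_2NM+14N^3+4N^2M,$$ $$M_{n+1}(2,0)=H_2^3+21H_2^2N+12H_2^2M+120H_2N^2+120H_2NM+24H_2M^2+172N^3+204N^2M+72NM^2+8M^3,$$ with $H_{2,1}(2,0)=2$, $N_1(2,0)=M_1(2,0)=1$.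
   Context: Graphs are finite. For a graph $G$, a spanning subgraph $A$ has vertex set $V(G)$ and edge set $E(A)\subseteq E(G)$; $k(A)$ is its number of components, $r(A)=|V(G)|-k(A)$, $n(A)=|E(A)|-r(A)$; the weight of $A$ is $(x-1)^{r(G)-r(A)}(y-1)^{n(A)}$ and the Tutte polynomial $T(G;x,y)$ is the sum of the weights of all spanning subgraphs. The graphs $\Sigma_n$ ($n\ge1$; Schreier graphs of the Hanoi Towers group $H^{(3)}$ with loops removed) each have three outmost vertices top, left, right: $\Sigma_1$ is the triangle $K_3$; $\Sigma_{n+1}$ is the disjoint union of three copies $G_1,G_2,G_3$ of $\Sigma_n$ together with three new edges joining left$(G_1)$ to top$(G_2)$, right$(G_1)$ to top$(G_3)$, and right$(G_2)$ to left$(G_3)$; its outmost vertices are top$(G_1)$, left$(G_2)$, right$(G_3)$. $H_n=T(\Sigma_n;x,y)$. $H_{2,n}$ (resp. $H_{1,n}$, $H_{0,n}$) is the sum of the weights of the spanning subgraphs of $\Sigma_n$ in which the three outmost vertices lie in one component (resp. left and right outmost in one component, top in another; resp. the three in three distinct components). $N_n=H_{1,n}/(x-1)$ and $M_n=H_{0,n}/(x-1)^2$, which are polynomials. An acyclic orientation is an orientation of all edges with no directed cycle. *)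

theory Defs
  imports Complex_Main
begin

text \<open>Copy G_1, G_2, G_3 of Sigma_n inside
Sigma_(n+1) consists of words starting with 0, 1, 2 respectively.\<close>

definition sigma_verts :: "nat \<Rightarrow> nat list set" where
  "sigma_verts n = {w. length w = n \<and> set w \<subseteq> {0,1,2}}"

definition top_v :: "nat \<Rightarrow> nat list" where "top_v n = replicate n 0"
definition left_v :: "nat \<Rightarrow> nat list" where "left_v n = replicate n 1"
definition right_v :: "nat \<Rightarrow> nat list" where "right_v n = replicate n 2"

fun sigma_edges :: "nat \<Rightarrow> nat list set set" where
  "sigma_edges 0 = {}"
| "sigma_edges (Suc 0) = {{[0],[1]}, {[0],[2]}, {[1],[2]}}"
| "sigma_edges (Suc (Suc n)) =
     (\<Union>i\<in>{0,1,2}. (`) ((#) i) ` sigma_edges (Suc n))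
     \<union> {{0 # left_v (Suc n), 1 # top_v (Suc n)},
        {0 # right_v (Suc n), 2 # top_v (Suc n)},
        {1 # right_v (Suc n), 2 # left_v (Suc n)}}"

definition conn :: "nat list set set \<Rightarrow> nat list \<Rightarrow> nat list \<Rightarrow> bool" where
  "conn A u v \<longleftrightarrow> (u, v) \<in> {(a, b). {a, b} \<in> A}\<^sup>*"

definition ncomp :: "nat \<Rightarrow> nat list set set \<Rightarrow> nat" where
  "ncomp n A = card ((\<lambda>u. {v \<in> sigma_verts n. conn A u v}) ` sigma_verts n)"

definition rk :: "nat \<Rightarrow> nat list set set \<Rightarrow> int" where
  "rk n A = int (card (sigma_verts n)) - int (ncomp n A)"

definition nul :: "nat \<Rightarrow> nat list set set \<Rightarrow> int" where
  "nul n A = int (card A) - rk n A"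

definition weight :: "nat \<Rightarrow> nat list set set \<Rightarrow> real \<Rightarrow> real \<Rightarrow> real" where
  "weight n A x y = (x - 1) powi (rk n (sigma_edges n) - rk n A) * (y - 1) powi (nul n A)"

text \<open>H_n = T(Sigma_n; x, y)\<close>
definition Hpoly :: "nat \<Rightarrow> real \<Rightarrow> real \<Rightarrow> real" where
  "Hpoly n x y = (\<Sum>A\<in>Pow (sigma_edges n). weight n A x y)"

definition H2poly :: "nat \<Rightarrow> real \<Rightarrow> real \<Rightarrow> real" where
  "H2poly n x y = (\<Sum>A\<in>{A\<in>Pow (sigma_edges n).
      conn A (top_v n) (left_v n) \<and> conn A (left_v n) (right_v n)}. weight n A x y)"

definition H1poly :: "nat \<Rightarrow> real \<Rightarrow> real \<Rightarrow> real" where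
  "H1poly n x y = (\<Sum>A\<in>{A\<in>Pow (sigma_edges n).
      conn A (left_v n) (right_v n) \<and> \<not> conn A (top_v n) (left_v n)}. weight n A x y)"

definition H0poly :: "nat \<Rightarrow> real \<Rightarrow> real \<Rightarrow> real" where
  "H0poly n x y = (\<Sum>A\<in>{A\<in>Pow (sigma_edges n).
      \<not> conn A (top_v n) (left_v n) \<and> \<not> conn A (left_v n) (right_v n)
      \<and> \<not> conn A (top_v n) (right_v n)}. weight n A x y)"

definition Npoly :: "nat \<Rightarrow> real \<Rightarrow> real \<Rightarrow> real" where
  "Npoly n x y = H1poly n x y / (x - 1)"

definition Mpoly :: "nat \<Rightarrow> real \<Rightarrow> real \<Rightarrow> real" where
  "Mpoly n x y = H0poly n x y / (x - 1)^2"

definition acyclic_orientations :: "nat \<Rightarrow> (nat list \<times> nat list) set set" where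
  "acyclic_orientations n = {R. R \<subseteq> {(u, v). {u, v} \<in> sigma_edges n}
      \<and> (\<forall>u v. {u, v} \<in> sigma_edges n \<longrightarrow> ((u, v) \<in> R \<longleftrightarrow> (v, u) \<notin> R))
      \<and> acyclic R}"

end

theory Submission
  imports Defs
begin


definition relR :: "'a set set \<Rightarrow> ('a\<times>'a) set" where
  "relR A = {(a,b). {a,b} \<in> A}"

definition mapr :: "('a \<Rightarrow> 'b) \<Rightarrow> ('a\<times>'a) set \<Rightarrow> ('b\<times>'b) set" where
  "mapr f R = (\<lambda>(a,b). (f a, f b)) ` R"

definition orients :: "'a set set \<Rightarrow> ('a\<times>'a) set set" where
  "orients E = {R. R \<subseteq> relR E \<and> (\<forall>u v. {u,v}\<in>E \<longrightarrow> ((u,v)\<in>R \<longleftrightarrow> (v,u)\<notin>R))}"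

definition AO :: "'a set set \<Rightarrow> ('a \<Rightarrow> 'a) \<Rightarrow> ('a\<times>'a) set set" where
  "AO E \<phi> = {R\<in>orients E. acyclic (mapr \<phi> R)}"

definition kk :: "('a \<Rightarrow> 'a) \<Rightarrow> 'a set \<Rightarrow> 'a set set \<Rightarrow> nat" where
  "kk \<phi> V A = card ((\<lambda>x. {y \<in> \<phi>`V. (x,y) \<in> (mapr \<phi> (relR A))\<^sup>*}) ` (\<phi>`V))"

definition SS :: "'a set set \<Rightarrow> ('a \<Rightarrow> 'a) \<Rightarrow> 'a set \<Rightarrow> int" where
  "SS E \<phi> V = (\<Sum>A\<in>Pow E. (-1::int)^(card A + card (\<phi>`V) + kk \<phi> V A))"

lemma relR_insert: "relR (insert {u,v} A) = insert (u,v) (insert (v,u) (relR A))"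
  unfolding relR_def by (auto simp: doubleton_eq_iff)

lemma relR_empty[simp]: "relR {} = {}" by (simp add: relR_def)

lemma sym_relR: "sym (relR A)"
  unfolding relR_def sym_def by (auto simp: insert_commute)

lemma mapr_insert: "mapr f (insert (a,b) R) = insert (f a, f b) (mapr f R)"
  by (simp add: mapr_def)

lemma mapr_empty[simp]: "mapr f {} = {}" by (simp add: mapr_def)

lemma mapr_comp: "mapr (g \<circ> f) R = mapr g (mapr f R)"
  unfolding mapr_def by force

lemma mapr_id: "mapr id R = R" unfolding mapr_def by force

lemma sym_mapr: "sym R \<Longrightarrow> sym (mapr f R)"
  unfolding sym_def
proof (intro allI impI)
  fix x y assume s: "\<forall>x y. (x, y) \<in> R \<longrightarrow> (y, x) \<in> R" and "(x,y) \<in> mapr f R"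
  then obtain p q where "(p,q) \<in> R" "x = f p" "y = f q" unfolding mapr_def by auto
  with s show "(y,x) \<in> mapr f R" unfolding mapr_def by force
qed

lemma mapr_rtrancl: "(x,y) \<in> R\<^sup>* \<Longrightarrow> (f x, f y) \<in> (mapr f R)\<^sup>*"
proof (induction rule: rtrancl_induct)
  case base then show ?case by simp
next
  case (step y z)
  then have "(f y, f z) \<in> mapr f R" unfolding mapr_def by force
  with step show ?case by (meson rtrancl.rtrancl_into_rtrancl)
qed

lemma mapr_trancl: "(x,y) \<in> R\<^sup>+ \<Longrightarrow> (f x, f y) \<in> (mapr f R)\<^sup>+"
proof (induction rule: trancl_induct)
  case (base y) then show ?case unfolding mapr_def by force
next
  case (step y z)
  then have "(f y, f z) \<in> mapr f R" unfolding mapr_def by force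
  with step show ?case by (meson trancl.trancl_into_trancl)
qed

definition mrg :: "'a \<Rightarrow> 'a \<Rightarrow> 'a \<Rightarrow> 'a" where
  "mrg a b z = (if z = b then a else z)"

lemma mrg_eq: "mrg a b x = mrg a b y \<Longrightarrow> x = y \<or> (x = a \<and> y = b) \<or> (x = b \<and> y = a)"
  unfolding mrg_def by (auto split: if_splits)

lemma lift_rtrancl:
  assumes "(x',y') \<in> (mapr (mrg a b) D)\<^sup>*"
  shows "mrg a b x = x' \<Longrightarrow> mrg a b y = y' \<Longrightarrow> (x,y) \<in> (insert (a,b) (insert (b,a) D))\<^sup>*"
  using assms
proof (induction arbitrary: y rule: rtrancl_induct)
  case base
  then have "x = y \<or> (x = a \<and> y = b) \<or> (x = b \<and> y = a)" using mrg_eq by metis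
  then show ?case by auto
next
  case (step z' w)
  from step(2) obtain p q where pq: "(p,q) \<in> D" "mrg a b p = z'" "mrg a b q = w"
    unfolding mapr_def by auto
  have 1: "(x,p) \<in> (insert (a,b) (insert (b,a) D))\<^sup>*" using step pq by blast
  have "q = y \<or> (q = a \<and> y = b) \<or> (q = b \<and> y = a)" using mrg_eq pq step(5) by metis
  then have 2: "(q,y) \<in> (insert (a,b) (insert (b,a) D))\<^sup>*" by auto
  have "(p,q) \<in> (insert (a,b) (insert (b,a) D))\<^sup>*" using pq by auto
  with 1 2 show ?case by (meson rtrancl_trans)
qed

lemma ins2_rtrancl:
  "(x,y) \<in> (insert (a,b) (insert (b,a) D))\<^sup>* \<Longrightarrow>
    (x,y) \<in> D\<^sup>* \<or> (((x,a) \<in> D\<^sup>* \<or> (x,b) \<in> D\<^sup>*) \<and> ((a,y) \<in> D\<^sup>* \<or> (b,y) \<in> D\<^sup>*))"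
  unfolding rtrancl_insert by auto

lemma path3: "(x,p) \<in> D\<^sup>* \<Longrightarrow> (p,q) \<in> D \<Longrightarrow> (q,w) \<in> D\<^sup>* \<Longrightarrow> (x,w) \<in> D\<^sup>+"
  by (metis rtrancl_into_trancl1 trancl_rtrancl_trancl)

lemma merge_acyclic:
  assumes ab: "a \<noteq> b"
  shows "acyclic (mapr (mrg a b) D) \<longleftrightarrow> acyclic D \<and> (a,b) \<notin> D\<^sup>* \<and> (b,a) \<notin> D\<^sup>*"
proof
  assume ac: "acyclic (mapr (mrg a b) D)"
  have "acyclic D"
    using ac mapr_trancl unfolding acyclic_def by metis
  moreover have "(a,b) \<notin> D\<^sup>*"
  proof
    assume "(a,b) \<in> D\<^sup>*"
    then have "(a,b) \<in> D\<^sup>+" using ab by (metis rtranclD)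
    then have "(mrg a b a, mrg a b b) \<in> (mapr (mrg a b) D)\<^sup>+" by (rule mapr_trancl)
    then show False using ac ab unfolding acyclic_def mrg_def by auto
  qed
  moreover have "(b,a) \<notin> D\<^sup>*"
  proof
    assume "(b,a) \<in> D\<^sup>*"
    then have "(b,a) \<in> D\<^sup>+" using ab by (metis rtranclD)
    then have "(mrg a b b, mrg a b a) \<in> (mapr (mrg a b) D)\<^sup>+" by (rule mapr_trancl)
    then show False using ac ab unfolding acyclic_def mrg_def by auto
  qed
  ultimately show "acyclic D \<and> (a,b) \<notin> D\<^sup>* \<and> (b,a) \<notin> D\<^sup>*" by blast
next
  assume h: "acyclic D \<and> (a,b) \<notin> D\<^sup>* \<and> (b,a) \<notin> D\<^sup>*"
  show "acyclic (mapr (mrg a b) D)"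
  unfolding acyclic_def
  proof (intro allI notI)
    fix c assume "(c,c) \<in> (mapr (mrg a b) D)\<^sup>+"
    then obtain z where cz: "(c,z) \<in> mapr (mrg a b) D" "(z,c) \<in> (mapr (mrg a b) D)\<^sup>*"
      by (meson tranclD)
    from cz(1) obtain p q where pq: "(p,q) \<in> D" "mrg a b p = c" "mrg a b q = z"
      unfolding mapr_def by auto
    have "(q,p) \<in> (insert (a,b) (insert (b,a) D))\<^sup>*"
      using lift_rtrancl[OF cz(2) pq(3) pq(2)] .
    then have "(q,p) \<in> D\<^sup>* \<or> (((q,a) \<in> D\<^sup>* \<or> (q,b) \<in> D\<^sup>*) \<and> ((a,p) \<in> D\<^sup>* \<or> (b,p) \<in> D\<^sup>*))"
      by (rule ins2_rtrancl)
    then show False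
      using h pq(1) path3[of _ p D q] unfolding acyclic_def
      by (metis rtrancl.rtrancl_refl trancl_into_rtrancl)
  qed
qed

lemma card_image_rel:
  assumes "\<And>x y. x\<in>W \<Longrightarrow> y\<in>W \<Longrightarrow> (f x = f y) \<longleftrightarrow> (g x = g y)"
  shows "card (f ` W) = card (g ` W)"
proof -
  have "bij_betw (\<lambda>z. g (inv_into W f z)) (f`W) (g`W)"
  proof (rule bij_betwI')
    fix z1 z2 assume "z1 \<in> f`W" "z2 \<in> f`W"
    then show "(g (inv_into W f z1) = g (inv_into W f z2)) = (z1 = z2)"
      using assms by (metis f_inv_into_f inv_into_into)
  next
    fix z assume "z \<in> f`W" then show "g (inv_into W f z) \<in> g ` W"
      by (simp add: inv_into_into)
  next
    fix y assume "y \<in> g ` W"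
    then obtain x where x: "x \<in> W" "y = g x" by auto
    have "g (inv_into W f (f x)) = g x"
      using assms x by (metis f_inv_into_f image_eqI inv_into_into)
    with x show "\<exists>z\<in>f ` W. y = g (inv_into W f z)" by (metis image_eqI)
  qed
  then show ?thesis by (rule bij_betw_same_card)
qed

lemma cls_eq:
  assumes "sym R" "x\<in>W" "y\<in>W"
  shows "({z\<in>W. (x,z)\<in>R\<^sup>*} = {z\<in>W. (y,z)\<in>R\<^sup>*}) \<longleftrightarrow> (x,y)\<in>R\<^sup>*"
proof
  assume "{z\<in>W. (x,z)\<in>R\<^sup>*} = {z\<in>W. (y,z)\<in>R\<^sup>*}"
  then show "(x,y)\<in>R\<^sup>*" using assms(3) by blast
next
  assume xy: "(x,y)\<in>R\<^sup>*"
  then have "(y,x)\<in>R\<^sup>*" using sym_rtrancl[OF assms(1)] unfolding sym_def by blast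
  with xy show "{z\<in>W. (x,z)\<in>R\<^sup>*} = {z\<in>W. (y,z)\<in>R\<^sup>*}"
    by (auto intro: rtrancl_trans)
qed

lemma rtrancl_insert_loop: "(insert (a,a) X)\<^sup>* = X\<^sup>*"
  unfolding rtrancl_insert by (auto intro: rtrancl_trans)

lemma mrg_image_card:
  assumes "finite W" "a \<in> W" "b \<in> W" "a \<noteq> b"
  shows "card (mrg a b ` W) + 1 = card W"
proof -
  have "mrg a b ` W = W - {b}"
    using assms unfolding mrg_def by (auto simp: image_iff)
  then show ?thesis using assms by (simp add: card_Diff_singleton) (metis Suc_pred card_gt_0_iff empty_iff)
qed

lemma kk_insert:
  assumes ne: "\<phi> u \<noteq> \<phi> v"
  shows "kk \<phi> V (insert {u,v} A) = kk (mrg (\<phi> u) (\<phi> v) \<circ> \<phi>) V A"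
proof -
  define a b where "a = \<phi> u" and "b = \<phi> v"
  define m where "m = mrg a b"
  define W where "W = \<phi> ` V"
  define R where "R = mapr \<phi> (relR A)"
  define R2 where "R2 = insert (a,b) (insert (b,a) R)"
  have symR: "sym R" unfolding R_def by (rule sym_mapr[OF sym_relR])
  have symR2: "sym R2" using symR unfolding R2_def sym_def by auto
  have symM: "sym (mapr m R)" by (rule sym_mapr[OF symR])
  have mR2: "mapr m R2 = insert (a,a) (insert (a,a) (mapr m R))"
    unfolding R2_def m_def by (simp add: mapr_insert mrg_def)
  have L: "kk \<phi> V (insert {u,v} A) = card ((\<lambda>x. {y\<in>W. (x,y)\<in>R2\<^sup>*}) ` W)"
    unfolding kk_def W_def R2_def R_def a_def b_def by (simp add: relR_insert mapr_insert)
  have R': "kk (m \<circ> \<phi>) V A = card (((\<lambda>x. {y\<in>m`W. (x,y)\<in>(mapr m R)\<^sup>*}) \<circ> m) ` W)"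
    unfolding kk_def W_def R_def mapr_comp image_comp[symmetric] by (simp add: image_comp)
  have key: "(x,y)\<in>R2\<^sup>* \<longleftrightarrow> (m x, m y) \<in> (mapr m R)\<^sup>*" for x y
  proof
    assume "(x,y)\<in>R2\<^sup>*"
    then have "(m x, m y) \<in> (mapr m R2)\<^sup>*" by (rule mapr_rtrancl)
    then show "(m x, m y) \<in> (mapr m R)\<^sup>*" unfolding mR2 rtrancl_insert_loop .
  next
    assume "(m x, m y) \<in> (mapr m R)\<^sup>*"
    then show "(x,y)\<in>R2\<^sup>*" unfolding R2_def m_def using lift_rtrancl by metis
  qed
  have "card ((\<lambda>x. {y\<in>W. (x,y)\<in>R2\<^sup>*}) ` W) =
        card (((\<lambda>x. {y\<in>m`W. (x,y)\<in>(mapr m R)\<^sup>*}) \<circ> m) ` W)"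
  proof (rule card_image_rel)
    fix x y assume xy: "x \<in> W" "y \<in> W"
    have 1: "({z\<in>W. (x,z)\<in>R2\<^sup>*} = {z\<in>W. (y,z)\<in>R2\<^sup>*}) \<longleftrightarrow> (x,y)\<in>R2\<^sup>*"
      by (rule cls_eq[OF symR2 xy])
    have 2: "({z\<in>m`W. (m x,z)\<in>(mapr m R)\<^sup>*} = {z\<in>m`W. (m y,z)\<in>(mapr m R)\<^sup>*})
        \<longleftrightarrow> (m x, m y)\<in>(mapr m R)\<^sup>*"
      by (rule cls_eq[OF symM]) (use xy in auto)
    show "({z\<in>W. (x,z)\<in>R2\<^sup>*} = {z\<in>W. (y,z)\<in>R2\<^sup>*}) =
      (((\<lambda>x. {y\<in>m`W. (x,y)\<in>(mapr m R)\<^sup>*}) \<circ> m) x =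
       ((\<lambda>x. {y\<in>m`W. (x,y)\<in>(mapr m R)\<^sup>*}) \<circ> m) y)"
      using 1 2 key by simp
  qed
  then show ?thesis using L R' unfolding m_def a_def b_def by simp
qed

lemma sum_Pow_insert:
  assumes "finite E" "e \<notin> E"
  shows "(\<Sum>A\<in>Pow (insert e E). f A) = (\<Sum>A\<in>Pow E. f A) + (\<Sum>A\<in>Pow E. f (insert e A))"
proof -
  have inj: "inj_on (insert e) (Pow E)" using assms(2) unfolding inj_on_def
    by (metis PowD insert_ident subset_iff)
  have disj: "Pow E \<inter> insert e ` Pow E = {}" using assms(2) by auto
  have "(\<Sum>A\<in>Pow (insert e E). f A) = (\<Sum>A\<in>Pow E. f A) + (\<Sum>A\<in>insert e ` Pow E. f A)"
    unfolding Pow_insert using assms(1) disj by (simp add: sum.union_disjoint)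
  also have "(\<Sum>A\<in>insert e ` Pow E. f A) = (\<Sum>A\<in>Pow E. f (insert e A))"
    using sum.reindex[OF inj] by simp
  finally show ?thesis .
qed

lemma relR_sub:
  assumes H: "\<forall>e\<in>E. \<exists>u v. u\<in>V \<and> v\<in>V \<and> e = {u,v}"
  shows "relR E \<subseteq> V \<times> V"
proof
  fix p assume p: "p \<in> relR E"
  obtain a b where ab: "p = (a,b)" by force
  with p have "{a,b} \<in> E" unfolding relR_def by simp
  with H obtain u v where uv: "{a,b} = {u,v}" "u \<in> V" "v \<in> V" by metis
  have "a \<in> {u,v}" "b \<in> {u,v}" using uv(1) by (metis insertI1, metis insertI1 insert_commute)
  then show "p \<in> V \<times> V" using ab uv by auto
qed

lemma finite_orients:
  assumes "finite V" "\<forall>e\<in>E. \<exists>u v. u\<in>V \<and> v\<in>V \<and> e = {u,v}"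
  shows "finite (orients E)"
proof -
  have "orients E \<subseteq> Pow (V \<times> V)" using relR_sub[OF assms(2)] unfolding orients_def by auto
  then show ?thesis using assms(1) by (meson finite_Pow_iff finite_SigmaI finite_subset)
qed

lemma orients_empty: "orients {} = {{}}"
  unfolding orients_def by auto

lemma orients_insert:
  assumes "e = {u,v}" "u \<noteq> v" "e \<notin> E"
  shows "orients (insert e E) = insert (u,v) ` orients E \<union> insert (v,u) ` orients E"
    and "R \<in> orients E \<Longrightarrow> (u,v) \<notin> R \<and> (v,u) \<notin> R"
proof -
  have uv_ne: "u \<noteq> v" by (rule assms(2))
  have nuv: "(u,v) \<notin> relR E" "(v,u) \<notin> relR E" using assms unfolding relR_def by (auto simp: insert_commute)
  show nR: "R \<in> orients E \<Longrightarrow> (u,v) \<notin> R \<and> (v,u) \<notin> R" for R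
    using nuv unfolding orients_def by auto
  show "orients (insert e E) = insert (u,v) ` orients E \<union> insert (v,u) ` orients E"
  proof
    show "orients (insert e E) \<subseteq> insert (u,v) ` orients E \<union> insert (v,u) ` orients E"
    proof
      fix R assume R: "R \<in> orients (insert e E)"
      define R' where "R' = R - {(u,v),(v,u)}"
      have ne: "{x,y} \<noteq> e" if "(x,y) \<in> R'" for x y
        using that uv_ne unfolding R'_def using assms(1) by (auto simp: doubleton_eq_iff)
      have R'o: "R' \<in> orients E"
        unfolding orients_def
      proof (intro CollectI conjI allI impI)
        show "R' \<subseteq> relR E"
        proof
          fix p assume p: "p \<in> R'"
          obtain x y where [simp]: "p = (x,y)" by force
          have "{x,y} \<in> insert e E" using R p unfolding orients_def relR_def R'_def by auto
          then show "p \<in> relR E" using ne[of x y] p unfolding relR_def by auto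
        qed
      next
        fix x y assume xy: "{x,y} \<in> E"
        then have "{x,y} \<noteq> e" "{y,x} \<noteq> e" using assms(3) by (auto simp: insert_commute)
        then have "(x,y) \<notin> {(u,v),(v,u)}" "(y,x) \<notin> {(u,v),(v,u)}" using assms(1) by (auto simp: insert_commute)
        moreover have "(x,y)\<in>R \<longleftrightarrow> (y,x)\<notin>R" using R xy unfolding orients_def by auto
        ultimately show "(x,y)\<in>R' \<longleftrightarrow> (y,x)\<notin>R'" unfolding R'_def by auto
      qed
      have "(u,v) \<in> R \<longleftrightarrow> (v,u) \<notin> R" using R assms unfolding orients_def by auto
      then have "R = insert (u,v) R' \<or> R = insert (v,u) R'" unfolding R'_def by auto
      then show "R \<in> insert (u,v) ` orients E \<union> insert (v,u) ` orients E" using R'o by blast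
    qed
  next
    show "insert (u,v) ` orients E \<union> insert (v,u) ` orients E \<subseteq> orients (insert e E)"
    proof
      fix R assume "R \<in> insert (u,v) ` orients E \<union> insert (v,u) ` orients E"
      then obtain R' p where R': "R' \<in> orients E" "p = (u,v) \<or> p = (v,u)" "R = insert p R'" by blast
      have n': "(u,v) \<notin> R'" "(v,u) \<notin> R'" using nR R' by auto
      have sub: "R \<subseteq> relR (insert e E)" using R' assms unfolding orients_def relR_def
        by (auto simp: insert_commute)
      have "\<forall>x y. {x,y}\<in>insert e E \<longrightarrow> ((x,y)\<in>R \<longleftrightarrow> (y,x)\<notin>R)"
      proof (intro allI impI)
        fix x y assume xy: "{x,y}\<in>insert e E"
        show "((x,y)\<in>R \<longleftrightarrow> (y,x)\<notin>R)"
        proof (cases "{x,y} = e")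
          case True
          then have "(x = u \<and> y = v) \<or> (x = v \<and> y = u)" using assms by (auto simp: doubleton_eq_iff)
          then show ?thesis using R' n' assms(2) by auto
        next
          case False
          then have "{x,y} \<in> E" using xy by auto
          moreover have "(x,y) \<noteq> (u,v) \<and> (x,y) \<noteq> (v,u)" using False assms by (auto simp: insert_commute)
          ultimately show ?thesis using R' unfolding orients_def by auto
        qed
      qed
      then show "R \<in> orients (insert e E)" using sub unfolding orients_def by auto
    qed
  qed
qed

lemma inj_insert_on:
  "\<forall>R\<in>X. p \<notin> R \<Longrightarrow> inj_on (insert p) X"
  unfolding inj_on_def by (metis Diff_insert_absorb)

theorem stanley:
  assumes "finite V" "finite E" "\<forall>e\<in>E. \<exists>u v. u \<noteq> v \<and> u\<in>V \<and> v\<in>V \<and> e = {u,v}"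
  shows "int (card (AO E \<phi>)) = SS E \<phi> V"
  using assms(2,3)
proof (induction E arbitrary: \<phi> rule: finite_induct)
  case empty
  have ao: "AO {} \<phi> = {{}}" unfolding AO_def orients_empty by (auto simp: acyclic_def)
  have "kk \<phi> V {} = card (\<phi>`V)"
  proof -
    have "(\<lambda>x. {y \<in> \<phi>`V. (x,y) \<in> (mapr \<phi> (relR {}))\<^sup>*}) ` (\<phi>`V) = (\<lambda>x. {x}) ` (\<phi>`V)"
      by (auto simp: image_iff)
    then show ?thesis unfolding kk_def by (simp add: card_image)
  qed
  then show ?case unfolding SS_def ao by simp
next
  case (insert e E \<phi>)
  obtain u v where uv: "u \<noteq> v" "u\<in>V" "v\<in>V" "e = {u,v}" using insert.prems by auto
  have hypE: "\<forall>e\<in>E. \<exists>u v. u \<noteq> v \<and> u\<in>V \<and> v\<in>V \<and> e = {u,v}" using insert.prems by auto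
  have hypE': "\<forall>e\<in>E. \<exists>u v. u\<in>V \<and> v\<in>V \<and> e = {u,v}"
  proof
    fix e assume "e \<in> E" then obtain u v where "u\<in>V" "v\<in>V" "e = {u,v}" using hypE by metis
    then show "\<exists>u v. u\<in>V \<and> v\<in>V \<and> e = {u,v}" by blast
  qed
  have finO: "finite (orients E)" by (rule finite_orients[OF assms(1) hypE'])
  note oi = orients_insert[OF uv(4) uv(1) insert.hyps(2)]
  define X1 where "X1 = {R\<in>orients E. acyclic (mapr \<phi> R) \<and> (\<phi> v, \<phi> u) \<notin> (mapr \<phi> R)\<^sup>*}"
  define X2 where "X2 = {R\<in>orients E. acyclic (mapr \<phi> R) \<and> (\<phi> u, \<phi> v) \<notin> (mapr \<phi> R)\<^sup>*}"
  have AOi: "AO (insert e E) \<phi> = insert (u,v) ` X1 \<union> insert (v,u) ` X2"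
    unfolding AO_def oi(1) X1_def X2_def by (auto simp: mapr_insert)
  have inj1: "inj_on (insert (u,v)) X1" by (rule inj_insert_on) (use oi(2) in \<open>auto simp: X1_def\<close>)
  have inj2: "inj_on (insert (v,u)) X2" by (rule inj_insert_on) (use oi(2) in \<open>auto simp: X2_def\<close>)
  have disj: "insert (u,v) ` X1 \<inter> insert (v,u) ` X2 = {}"
    using oi(2) uv(1) unfolding X1_def X2_def by auto
  have fX1: "finite X1" "finite X2" using finO unfolding X1_def X2_def by auto
  have cardAO: "card (AO (insert e E) \<phi>) = card X1 + card X2"
    unfolding AOi using disj fX1 by (simp add: card_Un_disjoint card_image inj1 inj2)
  have split: "SS (insert e E) \<phi> V = (\<Sum>A\<in>Pow E. (-1::int)^(card A + card (\<phi>`V) + kk \<phi> V A))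
       + (\<Sum>A\<in>Pow E. (-1::int)^(card (insert e A) + card (\<phi>`V) + kk \<phi> V (insert e A)))"
    unfolding SS_def by (rule sum_Pow_insert[OF insert.hyps(1,2)])
  have cardins: "card (insert e A) = card A + 1" if "A \<in> Pow E" for A
  proof -
    have "finite A" "e \<notin> A" using that insert.hyps(1,2) by (auto intro: finite_subset)
    then show ?thesis by simp
  qed
  show ?case
  proof (cases "\<phi> u = \<phi> v")
    case True
    have "X1 = {}" "X2 = {}" unfolding X1_def X2_def using True by auto
    then have c0: "card (AO (insert e E) \<phi>) = 0" using cardAO by simp
    have kkeq: "kk \<phi> V (insert e A) = kk \<phi> V A" for A
      unfolding kk_def uv(4) relR_insert mapr_insert True rtrancl_insert_loop ..
    have "SS (insert e E) \<phi> V = 0"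
      unfolding split sum.distrib[symmetric] by (rule sum.neutral) (simp add: kkeq cardins)
    then show ?thesis using c0 by simp
  next
    case False
    define m where "m = mrg (\<phi> u) (\<phi> v)"
    have un: "X1 \<union> X2 = AO E \<phi>"
    proof -
      have "\<not> ((\<phi> v, \<phi> u) \<in> D\<^sup>* \<and> (\<phi> u, \<phi> v) \<in> D\<^sup>*)" if "acyclic D" for D :: "('a\<times>'a) set"
      proof
        assume "(\<phi> v, \<phi> u) \<in> D\<^sup>* \<and> (\<phi> u, \<phi> v) \<in> D\<^sup>*"
        then have "(\<phi> u, \<phi> v) \<in> D\<^sup>+" "(\<phi> v, \<phi> u) \<in> D\<^sup>*" using False by (metis rtranclD)+
        then have "(\<phi> u, \<phi> u) \<in> D\<^sup>+" by (meson trancl_rtrancl_trancl)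
        then show False using that unfolding acyclic_def by blast
      qed
      then show ?thesis unfolding X1_def X2_def AO_def by blast
    qed
    have int: "X1 \<inter> X2 = AO E (m \<circ> \<phi>)"
      unfolding X1_def X2_def AO_def mapr_comp m_def merge_acyclic[OF False] by blast
    have "card X1 + card X2 = card (AO E \<phi>) + card (AO E (m \<circ> \<phi>))"
      using card_Un_Int[OF fX1] un int by simp
    then have c: "int (card (AO (insert e E) \<phi>)) = SS E \<phi> V + SS E (m \<circ> \<phi>) V"
    proof -
      note i1 = insert.IH[OF hypE, of \<phi>] and i2 = insert.IH[OF hypE, of "m \<circ> \<phi>"]
      from cardAO \<open>card X1 + card X2 = _\<close> have "int (card (AO (insert e E) \<phi>)) = int (card (AO E \<phi>)) + int (card (AO E (m \<circ> \<phi>)))" by simp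
      then show ?thesis unfolding i1 i2 .
    qed
    have cimg: "card ((m \<circ> \<phi>) ` V) + 1 = card (\<phi> ` V)"
      unfolding image_comp[symmetric] m_def
      by (rule mrg_image_card) (use False uv assms(1) in auto)
    have "(-1::int)^(card (insert e A) + card (\<phi>`V) + kk \<phi> V (insert e A)) =
          (-1::int)^(card A + card ((m \<circ> \<phi>)`V) + kk (m \<circ> \<phi>) V A)" if "A \<in> Pow E" for A
    proof -
      have "card (insert e A) + card (\<phi>`V) + kk \<phi> V (insert e A) =
            (card A + card ((m \<circ> \<phi>)`V) + kk (m \<circ> \<phi>) V A) + 2"
        using cardins[OF that] cimg kk_insert[of \<phi> u v V A, OF False] unfolding uv(4) m_def by simp
      then show ?thesis by simp
    qed
    then have "(\<Sum>A\<in>Pow E. (-1::int)^(card (insert e A) + card (\<phi>`V) + kk \<phi> V (insert e A)))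
       = SS E (m \<circ> \<phi>) V"
      unfolding SS_def by (intro sum.cong) auto
    then have "SS (insert e E) \<phi> V = SS E \<phi> V + SS E (m \<circ> \<phi>) V"
      using split unfolding SS_def[of E \<phi> V] by simp
    then show ?thesis using c by simp
  qed
qed




definition rr :: "nat \<Rightarrow> nat \<Rightarrow> nat" where
  "rr k s = (if k = 0 then 0 else if k = 1 then (if s = 0 then 0 else 1)
     else if k = 2 then (if s \<le> 1 then 0 else 2) else if k = 3 then (if s = 1 then 1 else 0) else s)"

definition code :: "bool \<Rightarrow> bool \<Rightarrow> bool \<Rightarrow> nat" where
  "code a b c = (if a \<and> b then 0 else if b then 1 else if a then 2 else if c then 3 else 4)"

definition relab :: "nat list \<Rightarrow> nat \<Rightarrow> nat \<Rightarrow> nat list" where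
  "relab cl a b = map (\<lambda>c. if c = b then a else c) cl"

fun ufs :: "nat list \<Rightarrow> (nat\<times>nat) list \<Rightarrow> nat list \<times> nat" where
  "ufs cl [] = (cl, 0)"
| "ufs cl ((p,q)#es) = (let r = ufs (relab cl (cl!p) (cl!q)) es in
      (fst r, snd r + (if cl!p = cl!q then 0 else 1)))"

definition cl0 :: "nat \<Rightarrow> nat \<Rightarrow> nat \<Rightarrow> nat list" where
  "cl0 k0 k1 k2 = [rr k0 0, rr k0 1, rr k0 2, 3 + rr k1 0, 3 + rr k1 1, 3 + rr k1 2,
                   6 + rr k2 0, 6 + rr k2 1, 6 + rr k2 2]"

definition ncode :: "nat list \<Rightarrow> nat" where
  "ncode cl = code (cl!0 = cl!4) (cl!4 = cl!8) (cl!0 = cl!8)"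

definition ESL :: "(nat\<times>nat) list list" where
  "ESL = [[], [(1,3)], [(2,6)], [(2,6),(1,3)], [(5,7)], [(5,7),(1,3)], [(5,7),(2,6)], [(5,7),(2,6),(1,3)]]"

definition GG :: "nat \<Rightarrow> nat \<Rightarrow> nat \<Rightarrow> nat \<Rightarrow> int" where
  "GG k k0 k1 k2 = sum_list (map (\<lambda>es. let r = ufs (cl0 k0 k1 k2) es in
      if ncode (fst r) = k then (-1)^(length es + snd r) else 0) ESL)"

definition PP :: "nat \<Rightarrow> (nat \<Rightarrow> int) \<Rightarrow> int" where
  "PP k w = (\<Sum>k0<5. \<Sum>k1<5. \<Sum>k2<5. GG k k0 k1 k2 * w k0 * w k1 * w k2)"

lemma sum5: "(\<Sum>k<(5::nat). f k) = f 0 + f 1 + f 2 + f 3 + (f 4 :: int)"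
  by (simp add: numeral_eq_Suc lessThan_Suc add.commute add.left_commute)

lemma PP_all:
  assumes "w 1 = N" "w 2 = N" "w 3 = N"
  shows "PP 0 w = 2 * w 0^3 + 12 * w 0^2 * N + 6 * w 0 * N^2"
    "PP 1 w = w 0^3 + 11 * w 0^2 * N + 4 * w 0^2 * w 4 + 28 * w 0 * N^2
            + 8 * w 0 * N * w 4 + 14 * N^3 + 4 * N^2 * w 4"
    "PP 2 w = PP 1 w" "PP 3 w = PP 1 w"
    "PP 4 w = w 0^3 + 21 * w 0^2 * N + 12 * w 0^2 * w 4 + 120 * w 0 * N^2
            + 120 * w 0 * N * w 4 + 24 * w 0 * w 4^2 + 172 * N^3 + 204 * N^2 * w 4
            + 72 * N * w 4^2 + 8 * w 4^3"
  using assms unfolding PP_def sum5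
  by (simp_all add: GG_def ESL_def cl0_def rr_def relab_def ncode_def code_def)
     (simp_all add: algebra_simps power2_eq_square power3_eq_cube)




subsection \<open>Connectivity basics\<close>

lemma conn_rel: "conn A u v \<longleftrightarrow> (u,v) \<in> (relR A)\<^sup>*"
  by (simp add: conn_def relR_def)

lemma conn_refl[simp]: "conn A u u" by (simp add: conn_rel)

lemma conn_sym: "conn A u v \<Longrightarrow> conn A v u"
  using sym_rtrancl[OF sym_relR[of A]] unfolding conn_rel sym_def by blast

lemma conn_trans: "conn A u v \<Longrightarrow> conn A v w \<Longrightarrow> conn A u w"
  unfolding conn_rel by (rule rtrancl_trans)

lemma conn_insert:
  "conn (insert {u,v} A) x y \<longleftrightarrow> conn A x y \<or> (conn A x u \<and> conn A v y) \<or> (conn A x v \<and> conn A u y)"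
  unfolding conn_rel relR_insert rtrancl_insert by (auto intro: rtrancl_trans)

definition nc :: "nat list set \<Rightarrow> nat list set set \<Rightarrow> nat" where
  "nc V A = card ((\<lambda>u. {v\<in>V. conn A u v}) ` V)"

lemma ncomp_nc: "ncomp n A = nc (sigma_verts n) A"
  by (simp add: ncomp_def nc_def)

lemma nc_insert:
  assumes fin: "finite V" and uV: "u \<in> V" and vV: "v \<in> V"
  shows "nc V A = nc V (insert {u,v} A) + (if conn A u v then 0 else 1)"
proof (cases "conn A u v")
  case True
  have "conn (insert {u,v} A) x y \<longleftrightarrow> conn A x y" for x y
    unfolding conn_insert using True by (meson conn_sym conn_trans)
  then show ?thesis using True unfolding nc_def by simp
next
  case False
  define cls where "cls x = {y\<in>V. conn A x y}" for x
  define cls' where "cls' x = {y\<in>V. conn (insert {u,v} A) x y}" for x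
  define F where "F = cls ` {x\<in>V. \<not> conn A x u \<and> \<not> conn A x v}"
  have c1: "cls' x = cls u \<union> cls v" if "conn A x u \<or> conn A x v" for x
    using that False unfolding cls'_def cls_def conn_insert by (auto intro: conn_trans conn_sym)
  have c2: "cls' x = cls x" if "\<not> conn A x u" "\<not> conn A x v" for x
    using that unfolding cls'_def cls_def conn_insert by auto
  have e1: "cls' ` V = insert (cls u \<union> cls v) F"
  proof
    show "cls' ` V \<subseteq> insert (cls u \<union> cls v) F"
    proof
      fix S assume "S \<in> cls' ` V"
      then obtain x where x: "x \<in> V" "S = cls' x" by auto
      show "S \<in> insert (cls u \<union> cls v) F"
      proof (cases "conn A x u \<or> conn A x v")
        case True then show ?thesis using c1 x by simp
      next
        case False then show ?thesis using c2[of x] x unfolding F_def by auto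
      qed
    qed
    show "insert (cls u \<union> cls v) F \<subseteq> cls' ` V"
    proof -
      have "cls u \<union> cls v \<in> cls' ` V" using c1[of u] uV by auto
      moreover have "F \<subseteq> cls' ` V" unfolding F_def using c2 by auto
      ultimately show ?thesis by blast
    qed
  qed
  have e2: "cls ` V = insert (cls u) (insert (cls v) F)"
  proof
    show "cls ` V \<subseteq> insert (cls u) (insert (cls v) F)"
    proof
      fix S assume "S \<in> cls ` V"
      then obtain x where x: "x \<in> V" "S = cls x" by auto
      show "S \<in> insert (cls u) (insert (cls v) F)"
      proof (cases "conn A x u")
        case True
        then have "cls x = cls u" unfolding cls_def by (auto intro: conn_trans conn_sym)
        then show ?thesis using x by simp
      next
        case n1: False
        show ?thesis
        proof (cases "conn A x v")
          case True
          then have "cls x = cls v" unfolding cls_def by (auto intro: conn_trans conn_sym)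
          then show ?thesis using x by simp
        next
          case False
          then show ?thesis using x n1 unfolding F_def by auto
        qed
      qed
    qed
    show "insert (cls u) (insert (cls v) F) \<subseteq> cls ` V"
      unfolding F_def using uV vV by auto
  qed
  have uin: "u \<in> cls u" "v \<in> cls v" using uV vV unfolding cls_def by auto
  have nF: "S \<in> F \<Longrightarrow> u \<notin> S \<and> v \<notin> S" for S
    unfolding F_def cls_def using conn_sym by blast
  have ne: "cls u \<noteq> cls v"
  proof
    assume "cls u = cls v"
    then have "v \<in> cls u" using uin by simp
    then show False using False unfolding cls_def by simp
  qed
  have finF: "finite F" unfolding F_def using fin by auto
  have n1: "cls u \<notin> F" "cls v \<notin> F" "cls u \<union> cls v \<notin> F" using nF uin by blast+
  have n2: "cls u \<notin> insert (cls v) F" using n1 ne by simp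
  have "card (cls ` V) = card F + 2"
    unfolding e2 using n1 n2 finF by simp
  moreover have "card (cls' ` V) = card F + 1"
    unfolding e1 using n1 finF by simp
  ultimately show ?thesis using False unfolding nc_def cls_def[symmetric] cls'_def[symmetric] by simp
qed

subsection \<open>Structure of Sigma\<close>

definition lab :: "nat \<Rightarrow> nat \<Rightarrow> nat list" where
  "lab n x = (x div 3) # replicate n (x mod 3)"

definition img :: "nat \<Rightarrow> nat list set set \<Rightarrow> nat list set set" where
  "img i A = (`) ((#) i) ` A"

definition edge :: "nat \<Rightarrow> nat \<times> nat \<Rightarrow> nat list set" where
  "edge n pq = {lab n (fst pq), lab n (snd pq)}"

lemma verts_Suc: "sigma_verts (Suc n) = (\<Union>i\<in>{0,1,2}. (#) i ` sigma_verts n)"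
proof
  show "sigma_verts (Suc n) \<subseteq> (\<Union>i\<in>{0,1,2}. (#) i ` sigma_verts n)"
  proof
    fix w assume "w \<in> sigma_verts (Suc n)"
    then obtain i w' where "w = i # w'" "length w' = n" "set w' \<subseteq> {0,1,2}" "i \<in> {0,1,2}"
      unfolding sigma_verts_def by (cases w) auto
    then show "w \<in> (\<Union>i\<in>{0,1,2}. (#) i ` sigma_verts n)" unfolding sigma_verts_def by auto
  qed
  show "(\<Union>i\<in>{0,1,2}. (#) i ` sigma_verts n) \<subseteq> sigma_verts (Suc n)"
    unfolding sigma_verts_def by auto
qed

lemma verts_0: "sigma_verts 0 = {[]}" unfolding sigma_verts_def by auto

lemma finite_verts: "finite (sigma_verts n)"
  by (induction n) (simp_all add: verts_0 verts_Suc)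

lemma card_verts_Suc: "card (sigma_verts (Suc n)) = 3 * card (sigma_verts n)"
proof -
  let ?V = "sigma_verts n"
  have "card (\<Union>i\<in>{0,1,2::nat}. (#) i ` ?V) = (\<Sum>i\<in>{0,1,2::nat}. card ((#) i ` ?V))"
    by (rule card_UN_disjoint) (auto simp: finite_verts)
  also have "\<dots> = 3 * card ?V" by (simp add: card_image)
  finally show ?thesis unfolding verts_Suc .
qed

lemma lab_in: "x < 9 \<Longrightarrow> lab n x \<in> sigma_verts (Suc n)"
  unfolding lab_def sigma_verts_def by auto

lemma edges_Suc: "sigma_edges (Suc n) = insert (edge n (1,3)) (insert (edge n (2,6)) (insert (edge n (5,7))
   (img 0 (sigma_edges n) \<union> img 1 (sigma_edges n) \<union> img 2 (sigma_edges n))))"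
  by (cases n) (auto simp: edge_def lab_def img_def top_v_def left_v_def right_v_def)

lemma finite_edges: "finite (sigma_edges n)"
  by (induction n) (simp_all add: edges_Suc img_def)

lemma edges_prop: "\<forall>e\<in>sigma_edges n. \<exists>u v. u \<noteq> v \<and> u \<in> sigma_verts n \<and> v \<in> sigma_verts n \<and> e = {u,v}"
proof (induction n)
  case 0 then show ?case by simp
next
  case (Suc n)
  have img: "\<exists>u v. u \<noteq> v \<and> u \<in> sigma_verts (Suc n) \<and> v \<in> sigma_verts (Suc n) \<and> e = {u,v}"
    if h: "e \<in> img i (sigma_edges n)" "i \<in> {0,1,2}" for e i
  proof -
    obtain e' where e': "e' \<in> sigma_edges n" "e = (#) i ` e'" using h(1) unfolding img_def by blast
    then obtain u v where "u \<noteq> v" "u \<in> sigma_verts n" "v \<in> sigma_verts n" "e' = {u,v}" using Suc by blast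
    then show ?thesis using e' h by (intro exI[of _ "i#u"] exI[of _ "i#v"]) (auto simp: verts_Suc)
  qed
  have lab: "\<exists>u v. u \<noteq> v \<and> u \<in> sigma_verts (Suc n) \<and> v \<in> sigma_verts (Suc n) \<and> edge n (p,q) = {u,v}"
    if "p < 9" "q < 9" "p div 3 \<noteq> q div 3" for p q
    using that lab_in[of p n] lab_in[of q n] unfolding edge_def
    by (intro exI[of _ "lab n p"] exI[of _ "lab n q"]) (auto simp: lab_def)
  show ?case unfolding edges_Suc
    using img[of _ 0] img[of _ 1] img[of _ 2] lab[of 1 3] lab[of 2 6] lab[of 5 7] by auto
qed

lemma edges_nonempty: "e \<in> sigma_edges n \<Longrightarrow> e \<noteq> {}"
  using edges_prop[of n] by auto

subsection \<open>Disjoint unions of copies\<close>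

lemma relR_img: "relR (img i A) = mapr ((#) i) (relR A)"
proof
  show "relR (img i A) \<subseteq> mapr ((#) i) (relR A)"
  proof
    fix p assume "p \<in> relR (img i A)"
    then obtain a b e where ab: "p = (a,b)" "e \<in> A" "{a,b} = (#) i ` e" unfolding relR_def img_def by auto
    then have "a \<in> (#) i ` e" "b \<in> (#) i ` e" by (metis insertI1, metis insertI1 insert_commute)
    then obtain x y where xy: "a = i # x" "b = i # y" "x \<in> e" "y \<in> e" by auto
    have "e = {x,y}"
    proof
      show "e \<subseteq> {x,y}"
      proof
        fix z assume "z \<in> e"
        then have "i # z \<in> {a,b}" using ab by auto
        then show "z \<in> {x,y}" using xy by auto
      qed
      show "{x,y} \<subseteq> e" using xy by auto
    qed
    then have "(x,y) \<in> relR A" using ab unfolding relR_def by auto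
    then show "p \<in> mapr ((#) i) (relR A)" unfolding mapr_def using ab xy by force
  qed
  show "mapr ((#) i) (relR A) \<subseteq> relR (img i A)"
  proof
    fix p assume "p \<in> mapr ((#) i) (relR A)"
    then obtain x y where "p = (i#x, i#y)" "{x,y} \<in> A" unfolding mapr_def relR_def by auto
    then show "p \<in> relR (img i A)" unfolding relR_def img_def by (auto intro: image_eqI[of _ _ "{x,y}"])
  qed
qed

lemma relR_UN: "relR (\<Union>i\<in>I. X i) = (\<Union>i\<in>I. relR (X i))"
  unfolding relR_def by auto

lemma conn_DD_aux:
  assumes "(p,q) \<in> (\<Union>i\<in>I. mapr ((#) i) (R i))\<^sup>*"
  shows "p = i # x \<Longrightarrow> i \<in> I \<Longrightarrow> \<exists>y. q = i # y \<and> (x,y) \<in> (R i)\<^sup>*"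
  using assms
proof (induction arbitrary: rule: rtrancl_induct)
  case base then show ?case by auto
next
  case (step q r)
  then obtain y where y: "q = i # y" "(x,y) \<in> (R i)\<^sup>*" by blast
  from step(2) obtain j a b where "j \<in> I" "(a,b) \<in> R j" "q = j # a" "r = j # b"
    unfolding mapr_def by auto
  with y show ?case by (auto intro: rtrancl_into_rtrancl)
qed

lemma conn_DD:
  assumes "i \<in> I" "j \<in> I"
  shows "conn (\<Union>i\<in>I. img i (AA i)) (i#x) (j#y) \<longleftrightarrow> i = j \<and> conn (AA i) x y"
proof
  assume "conn (\<Union>i\<in>I. img i (AA i)) (i#x) (j#y)"
  then have "(i#x, j#y) \<in> (\<Union>i\<in>I. mapr ((#) i) (relR (AA i)))\<^sup>*"
    unfolding conn_rel relR_UN relR_img .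
  from conn_DD_aux[OF this refl assms(1)] show "i = j \<and> conn (AA i) x y" unfolding conn_rel by auto
next
  assume h: "i = j \<and> conn (AA i) x y"
  then have "(i#x, i#y) \<in> (mapr ((#) i) (relR (AA i)))\<^sup>*"
    unfolding conn_rel by (auto dest: mapr_rtrancl)
  moreover have "mapr ((#) i) (relR (AA i)) \<subseteq> (\<Union>i\<in>I. mapr ((#) i) (relR (AA i)))" using assms by auto
  ultimately have "(i#x, i#y) \<in> (\<Union>i\<in>I. mapr ((#) i) (relR (AA i)))\<^sup>*" by (meson rtrancl_mono subsetD)
  then show "conn (\<Union>i\<in>I. img i (AA i)) (i#x) (j#y)" using h unfolding conn_rel relR_UN relR_img by simp
qed

lemma inj_image_Cons: "inj_on (image ((#) (i::nat))) X"
  unfolding inj_on_def by (meson inj_image_eq_iff list.inject inj_onI)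

lemma nc_DD:
  assumes fin: "finite V" "finite I"
  shows "nc (\<Union>i\<in>I. (#) i ` V) (\<Union>i\<in>I. img i (AA i)) = (\<Sum>i\<in>I. nc V (AA i))"
proof -
  define D where "D = (\<Union>i\<in>I. img i (AA i))"
  define V' where "V' = (\<Union>i\<in>I. (#) i ` V)"
  define cls where "cls i x = {y\<in>V. conn (AA i) x y}" for i x
  have clsD: "{y\<in>V'. conn D (i#x) y} = (#) i ` cls i x" if "i \<in> I" for i x
  proof
    show "{y\<in>V'. conn D (i#x) y} \<subseteq> (#) i ` cls i x"
      unfolding V'_def D_def cls_def using conn_DD[OF that] by auto
    show "(#) i ` cls i x \<subseteq> {y\<in>V'. conn D (i#x) y}"
      unfolding V'_def D_def cls_def using conn_DD[OF that that] that by auto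
  qed
  have img: "(\<lambda>u. {y\<in>V'. conn D u y}) ` V' = (\<Union>i\<in>I. image ((#) i) ` (cls i ` V))"
  proof -
    have "(\<lambda>u. {y\<in>V'. conn D u y}) ` V' = (\<Union>i\<in>I. (\<lambda>u. {y\<in>V'. conn D u y}) ` ((#) i ` V))"
      unfolding V'_def by blast
    also have "\<dots> = (\<Union>i\<in>I. image ((#) i) ` (cls i ` V))"
      by (intro SUP_cong refl) (auto simp: image_image clsD)
    finally show ?thesis .
  qed
  have "card (\<Union>i\<in>I. image ((#) i) ` (cls i ` V)) = (\<Sum>i\<in>I. card (image ((#) i) ` (cls i ` V)))"
  proof (rule card_UN_disjoint)
    show "finite I" by fact
    show "\<forall>i\<in>I. finite (image ((#) i) ` (cls i ` V))" using fin by auto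
    show "\<forall>i\<in>I. \<forall>j\<in>I. i \<noteq> j \<longrightarrow> image ((#) i) ` (cls i ` V) \<inter> image ((#) j) ` (cls j ` V) = {}"
    proof (intro ballI impI)
      fix i j assume "i \<in> I" "j \<in> I" "i \<noteq> j"
      show "image ((#) i) ` (cls i ` V) \<inter> image ((#) j) ` (cls j ` V) = {}"
      proof (rule ccontr)
        assume "image ((#) i) ` (cls i ` V) \<inter> image ((#) j) ` (cls j ` V) \<noteq> {}"
        then obtain x y where xy: "x \<in> V" "y \<in> V" "(#) i ` cls i x = (#) j ` cls j y" by auto
        have "x \<in> cls i x" using xy unfolding cls_def by auto
        then have "i # x \<in> (#) j ` cls j y" using xy by auto
        then show False using \<open>i \<noteq> j\<close> by auto
      qed
    qed
  qed
  also have "\<dots> = (\<Sum>i\<in>I. card (cls i ` V))"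
    by (intro sum.cong refl card_image inj_image_Cons)
  finally show ?thesis unfolding nc_def D_def[symmetric] V'_def[symmetric] img cls_def by simp
qed

lemma card_DD:
  assumes "finite I" "\<And>i. i \<in> I \<Longrightarrow> finite (AA i)" "\<And>i e. i \<in> I \<Longrightarrow> e \<in> AA i \<Longrightarrow> e \<noteq> {}"
  shows "card (\<Union>i\<in>I. img i (AA i)) = (\<Sum>i\<in>I. card (AA i))"
proof -
  have "card (\<Union>i\<in>I. img i (AA i)) = (\<Sum>i\<in>I. card (img i (AA i)))"
  proof (rule card_UN_disjoint)
    show "finite I" by fact
    show "\<forall>i\<in>I. finite (img i (AA i))" using assms(2) unfolding img_def by auto
    show "\<forall>i\<in>I. \<forall>j\<in>I. i \<noteq> j \<longrightarrow> img i (AA i) \<inter> img j (AA j) = {}"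
    proof (intro ballI impI)
      fix i j assume ij: "i \<in> I" "j \<in> I" "i \<noteq> j"
      show "img i (AA i) \<inter> img j (AA j) = {}"
      proof (rule ccontr)
        assume "img i (AA i) \<inter> img j (AA j) \<noteq> {}"
        then obtain e f where ef: "e \<in> AA i" "f \<in> AA j" "(#) i ` e = (#) j ` f" unfolding img_def by auto
        obtain x where "x \<in> e" using assms(3)[OF ij(1) ef(1)] by auto
        then have "i # x \<in> (#) j ` f" using ef by auto
        then show False using ij by auto
      qed
    qed
  qed
  also have "\<dots> = (\<Sum>i\<in>I. card (AA i))"
    unfolding img_def by (intro sum.cong refl card_image inj_image_Cons)
  finally show ?thesis .
qed

subsection \<open>Boundary codes\<close>

definition bcode :: "nat \<Rightarrow> nat list set set \<Rightarrow> nat" where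
  "bcode n A = code (conn A (top_v n) (left_v n)) (conn A (left_v n) (right_v n)) (conn A (top_v n) (right_v n))"

lemma bcode_lt: "bcode n A < 5" unfolding bcode_def code_def by auto

lemma rr_code:
  fixes a b c :: bool
  assumes T: "\<not> (a \<and> b \<and> \<not> c)" "\<not> (a \<and> c \<and> \<not> b)" "\<not> (c \<and> b \<and> \<not> a)"
  shows "(rr (code a b c) 0 = rr (code a b c) 1 \<longleftrightarrow> a) \<and> (rr (code a b c) 1 = rr (code a b c) 2 \<longleftrightarrow> b)
       \<and> (rr (code a b c) 0 = rr (code a b c) 2 \<longleftrightarrow> c)"
  using T by (cases a; cases b; cases c) (simp_all add: code_def rr_def)

lemma bcode_correct:
  assumes "s < 3" "t < 3"
  shows "conn A (replicate n s) (replicate n t) \<longleftrightarrow> rr (bcode n A) s = rr (bcode n A) t"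
proof -
  define r0 r1 r2 where "r0 = replicate n (0::nat)" and "r1 = replicate n (1::nat)" and "r2 = replicate n (2::nat)"
  have S: "conn A r1 r0 \<longleftrightarrow> conn A r0 r1" "conn A r2 r1 \<longleftrightarrow> conn A r1 r2" "conn A r2 r0 \<longleftrightarrow> conn A r0 r2"
    by (meson conn_sym)+
  have T: "\<not> (conn A r0 r1 \<and> conn A r1 r2 \<and> \<not> conn A r0 r2)"
          "\<not> (conn A r0 r1 \<and> conn A r0 r2 \<and> \<not> conn A r1 r2)"
          "\<not> (conn A r0 r2 \<and> conn A r1 r2 \<and> \<not> conn A r0 r1)"
    by (meson conn_sym conn_trans)+
  have b: "bcode n A = code (conn A r0 r1) (conn A r1 r2) (conn A r0 r2)"
    unfolding bcode_def r0_def r1_def r2_def top_v_def left_v_def right_v_def ..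
  note R = rr_code[OF T]
  define k where "k = bcode n A"
  have R': "rr k 0 = rr k 1 \<longleftrightarrow> conn A r0 r1" "rr k 1 = rr k 2 \<longleftrightarrow> conn A r1 r2" "rr k 0 = rr k 2 \<longleftrightarrow> conn A r0 r2"
    using R unfolding k_def b by auto
  have st: "s = 0 \<or> s = 1 \<or> s = 2" "t = 0 \<or> t = 1 \<or> t = 2" using assms by auto
  show ?thesis unfolding k_def[symmetric]
  proof -
    from st show "conn A (replicate n s) (replicate n t) \<longleftrightarrow> rr k s = rr k t"
    proof (elim disjE)
      qed (simp_all only: r0_def[symmetric] r1_def[symmetric] r2_def[symmetric] R' S conn_refl eq_commute[of "rr k 1" "rr k 0"] eq_commute[of "rr k 2" "rr k 1"] eq_commute[of "rr k 2" "rr k 0"] simp_thms)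
  qed
qed

definition binv :: "nat \<Rightarrow> nat list set set \<Rightarrow> nat list \<Rightarrow> bool" where
  "binv n D cl \<longleftrightarrow> length cl = 9 \<and> (\<forall>x<9. \<forall>y<9. conn D (lab n x) (lab n y) \<longleftrightarrow> cl!x = cl!y)"

lemma cl0_nth: "x < 9 \<Longrightarrow> cl0 k0 k1 k2 ! x = 3 * (x div 3) + rr ([k0,k1,k2] ! (x div 3)) (x mod 3)"
proof -
  assume "x < 9"
  then have "x = 0 \<or> x = 1 \<or> x = 2 \<or> x = 3 \<or> x = 4 \<or> x = 5 \<or> x = 6 \<or> x = 7 \<or> x = 8" by auto
  then show ?thesis by (auto simp: cl0_def)
qed

lemma div3_eq: "a < 3 \<Longrightarrow> b < 3 \<Longrightarrow> (3*x + a = 3*y + (b::nat)) \<longleftrightarrow> x = y \<and> a = b"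
  by presburger

lemma rr_lt: "s < 3 \<Longrightarrow> rr k s < 3" unfolding rr_def by auto

lemma inv_DD:
  "binv n (\<Union>i\<in>{0,1,2}. img i ([A0,A1,A2] ! i)) (cl0 (bcode n A0) (bcode n A1) (bcode n A2))"
  unfolding binv_def
proof (intro conjI allI impI)
  show "length (cl0 (bcode n A0) (bcode n A1) (bcode n A2)) = 9" by (simp add: cl0_def)
  fix x y :: nat assume xy: "x < 9" "y < 9"
  have I: "x div 3 \<in> {0,1,2}" "y div 3 \<in> {0,1,2}" using xy by auto
  have m: "x mod 3 < 3" "y mod 3 < 3" by auto
  have bl: "[bcode n A0, bcode n A1, bcode n A2] ! i = bcode n ([A0,A1,A2] ! i)" if "i \<in> {0,1,2}" for i
    using that by auto
  have "conn (\<Union>i\<in>{0,1,2}. img i ([A0,A1,A2] ! i)) (lab n x) (lab n y) \<longleftrightarrow>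
        x div 3 = y div 3 \<and> conn ([A0,A1,A2] ! (x div 3)) (replicate n (x mod 3)) (replicate n (y mod 3))"
    unfolding lab_def by (rule conn_DD[OF I])
  also have "\<dots> \<longleftrightarrow> x div 3 = y div 3 \<and> rr ([bcode n A0, bcode n A1, bcode n A2] ! (x div 3)) (x mod 3)
        = rr ([bcode n A0, bcode n A1, bcode n A2] ! (y div 3)) (y mod 3)"
    using bcode_correct[OF m] bl[OF I(1)] by auto
  also have "\<dots> \<longleftrightarrow> cl0 (bcode n A0) (bcode n A1) (bcode n A2) ! x = cl0 (bcode n A0) (bcode n A1) (bcode n A2) ! y"
    unfolding cl0_nth[OF xy(1)] cl0_nth[OF xy(2)] by (rule div3_eq[symmetric]) (rule rr_lt[OF m(1)], rule rr_lt[OF m(2)])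
  finally show "conn (\<Union>i\<in>{0,1,2}. img i ([A0,A1,A2] ! i)) (lab n x) (lab n y) \<longleftrightarrow>
     cl0 (bcode n A0) (bcode n A1) (bcode n A2) ! x = cl0 (bcode n A0) (bcode n A1) (bcode n A2) ! y" .
qed

fun insl :: "nat \<Rightarrow> nat list set set \<Rightarrow> (nat \<times> nat) list \<Rightarrow> nat list set set" where
  "insl n D [] = D"
| "insl n D (pq # es) = insl n (insert (edge n pq) D) es"

lemma ufs_inv:
  assumes "binv n D cl" "\<forall>(p,q)\<in>set es. p < 9 \<and> q < 9"
  shows "binv n (insl n D es) (fst (ufs cl es)) \<and>
         nc (sigma_verts (Suc n)) D = nc (sigma_verts (Suc n)) (insl n D es) + snd (ufs cl es)"
  using assms
proof (induction es arbitrary: D cl)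
  case Nil then show ?case by simp
next
  case (Cons pq es)
  obtain p q where pq: "pq = (p,q)" by force
  have pq9: "p < 9" "q < 9" using Cons.prems(2) pq by auto
  define D1 where "D1 = insert (edge n (p,q)) D"
  define cl1 where "cl1 = relab cl (cl!p) (cl!q)"
  have inv1: "binv n D1 cl1"
    unfolding binv_def
  proof (intro conjI allI impI)
    show "length cl1 = 9" using Cons.prems(1) unfolding cl1_def relab_def binv_def by simp
    fix x y :: nat assume xy: "x < 9" "y < 9"
    have l: "length cl = 9" using Cons.prems(1) unfolding binv_def by simp
    have c: "conn D (lab n a) (lab n b) \<longleftrightarrow> cl!a = cl!b" if "a < 9" "b < 9" for a b
      using Cons.prems(1) that unfolding binv_def by blast
    have "conn D1 (lab n x) (lab n y) \<longleftrightarrow> conn D (lab n x) (lab n y) \<or>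
       (conn D (lab n x) (lab n p) \<and> conn D (lab n q) (lab n y)) \<or>
       (conn D (lab n x) (lab n q) \<and> conn D (lab n p) (lab n y))"
      unfolding D1_def edge_def by (simp add: conn_insert)
    also have "\<dots> \<longleftrightarrow> cl!x = cl!y \<or> (cl!x = cl!p \<and> cl!q = cl!y) \<or> (cl!x = cl!q \<and> cl!p = cl!y)"
      using c xy pq9 by simp
    also have "\<dots> \<longleftrightarrow> cl1!x = cl1!y"
      unfolding cl1_def relab_def using xy l by auto
    finally show "conn D1 (lab n x) (lab n y) \<longleftrightarrow> cl1!x = cl1!y" .
  qed
  have ncs: "nc (sigma_verts (Suc n)) D = nc (sigma_verts (Suc n)) D1 + (if cl!p = cl!q then 0 else 1)"
  proof -
    have "conn D (lab n p) (lab n q) \<longleftrightarrow> cl!p = cl!q" using Cons.prems(1) pq9 unfolding binv_def by blast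
    then show ?thesis unfolding D1_def edge_def
      using nc_insert[OF finite_verts lab_in[OF pq9(1)] lab_in[OF pq9(2)], where A = D] by simp
  qed
  have IH: "binv n (insl n D1 es) (fst (ufs cl1 es)) \<and>
         nc (sigma_verts (Suc n)) D1 = nc (sigma_verts (Suc n)) (insl n D1 es) + snd (ufs cl1 es)"
    using Cons.IH[OF inv1] Cons.prems(2) by auto
  show ?case using IH ncs unfolding pq D1_def cl1_def by (simp add: Let_def)
qed

lemma card_insl:
  assumes "finite D" "distinct (map (edge n) es)" "\<forall>e\<in>set es. edge n e \<notin> D"
  shows "card (insl n D es) = card D + length es"
  using assms
proof (induction es arbitrary: D)
  case Nil then show ?case by simp
next
  case (Cons e es)
  have "card (insl n (insert (edge n e) D) es) = card (insert (edge n e) D) + length es"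
    using Cons by (intro Cons.IH) auto
  then show ?case using Cons.prems by simp
qed

subsection \<open>Signed sums\<close>

definition sgs :: "nat \<Rightarrow> nat list set set \<Rightarrow> int" where
  "sgs n A = (-1)^(card A + card (sigma_verts n) + ncomp n A)"

definition W :: "nat \<Rightarrow> nat \<Rightarrow> int" where
  "W n k = (\<Sum>A\<in>Pow (sigma_edges n). if bcode n A = k then sgs n A else 0)"

definition DD :: "nat list set set \<Rightarrow> nat list set set \<Rightarrow> nat list set set \<Rightarrow> nat list set set" where
  "DD A0 A1 A2 = (\<Union>i\<in>{0,1,2}. img i ([A0,A1,A2] ! i))"

lemma ESL_pairs: "es \<in> set ESL \<Longrightarrow> \<forall>(p,q)\<in>set es. p < 9 \<and> q < 9"
  unfolding ESL_def by auto

lemma ESL_distinct: "es \<in> set ESL \<Longrightarrow> distinct (map (edge n) es)"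
  unfolding ESL_def edge_def lab_def by (auto simp: doubleton_eq_iff)

lemma edge_notin_img: "p div 3 \<noteq> q div 3 \<Longrightarrow> edge n (p,q) \<notin> img i A"
proof
  assume ne: "p div 3 \<noteq> q div 3" and "edge n (p,q) \<in> img i A"
  then obtain e where "{lab n p, lab n q} = (#) i ` e" unfolding edge_def img_def by auto
  then have "lab n p \<in> (#) i ` e" "lab n q \<in> (#) i ` e" by (metis insertI1, metis insertI1 insert_commute)
  then show False using ne unfolding lab_def by auto
qed

lemma ESL_notin: "es \<in> set ESL \<Longrightarrow> \<forall>e\<in>set es. edge n e \<notin> DD A0 A1 A2"
proof -
  assume "es \<in> set ESL"
  then have "\<forall>(p,q)\<in>set es. p div 3 \<noteq> q div 3" unfolding ESL_def by auto
  then show ?thesis unfolding DD_def using edge_notin_img by fast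
qed

lemma FI:
  assumes A: "A0 \<subseteq> sigma_edges n" "A1 \<subseteq> sigma_edges n" "A2 \<subseteq> sigma_edges n" and es: "es \<in> set ESL"
  defines "r \<equiv> ufs (cl0 (bcode n A0) (bcode n A1) (bcode n A2)) es"
  shows "bcode (Suc n) (insl n (DD A0 A1 A2) es) = ncode (fst r)"
    and "sgs (Suc n) (insl n (DD A0 A1 A2) es) = (-1)^(length es + snd r) * sgs n A0 * sgs n A1 * sgs n A2"
proof -
  define D where "D = DD A0 A1 A2"
  define V where "V = sigma_verts n"
  have iu: "binv n (insl n D es) (fst r) \<and> nc (sigma_verts (Suc n)) D = nc (sigma_verts (Suc n)) (insl n D es) + snd r"
    unfolding r_def D_def DD_def by (rule ufs_inv[OF inv_DD ESL_pairs[OF es]])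
  have lab0: "top_v (Suc n) = lab n 0" "left_v (Suc n) = lab n 4" "right_v (Suc n) = lab n 8"
    unfolding top_v_def left_v_def right_v_def lab_def by simp_all
  show "bcode (Suc n) (insl n (DD A0 A1 A2) es) = ncode (fst r)"
    using iu unfolding D_def bcode_def ncode_def lab0 binv_def by simp
  have finE: "finite A0" "finite A1" "finite A2" using A finite_edges by (auto intro: finite_subset)
  have neE: "\<And>i e. i \<in> {0,1,2} \<Longrightarrow> e \<in> [A0,A1,A2] ! i \<Longrightarrow> e \<noteq> {}"
    using A edges_nonempty[of "{}" n] by auto
  have cardD: "card D = card A0 + card A1 + card A2"
    unfolding D_def DD_def by (subst card_DD) (use finE neE in auto)
  have finD: "finite D" unfolding D_def DD_def img_def using finE by auto
  have cardI: "card (insl n D es) = card D + length es"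
    by (rule card_insl[OF finD ESL_distinct[OF es]]) (use ESL_notin[OF es] in \<open>simp add: D_def\<close>)
  have ncD: "nc (sigma_verts (Suc n)) D = nc V A0 + nc V A1 + nc V A2"
    unfolding D_def DD_def verts_Suc V_def by (subst nc_DD) (auto simp: finite_verts)
  have cV: "card (sigma_verts (Suc n)) = 3 * card V" unfolding V_def by (rule card_verts_Suc)
  define N' where "N' = nc (sigma_verts (Suc n)) (insl n D es)"
  have key: "nc V A0 + nc V A1 + nc V A2 = N' + snd r" using iu ncD unfolding N'_def by simp
  have "sgs (Suc n) (insl n D es) = (-1::int)^(card A0 + card A1 + card A2 + length es + 3 * card V + N')"
    unfolding sgs_def ncomp_nc N'_def cardI cardD cV by (simp add: add.assoc)
  also have "\<dots> = (-1)^(length es + snd r) * sgs n A0 * sgs n A1 * sgs n A2"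
  proof -
    have "(length es + snd r) + (card A0 + card V + nc V A0) + (card A1 + card V + nc V A1) + (card A2 + card V + nc V A2)
        = (card A0 + card A1 + card A2 + length es + 3 * card V + N') + 2 * snd r"
      using key by simp
    then have "(-1::int)^((length es + snd r) + (card A0 + card V + nc V A0) + (card A1 + card V + nc V A1) + (card A2 + card V + nc V A2))
        = (-1)^(card A0 + card A1 + card A2 + length es + 3 * card V + N')"
      by (metis (no_types) power_add power_mult neg_one_even_power even_mult_iff even_numeral mult_1_right)
    moreover have "(-1::int)^(length es + snd r) * (-1)^(card A0 + card V + nc V A0) * (-1)^(card A1 + card V + nc V A1)
        * (-1)^(card A2 + card V + nc V A2) = (-1::int)^((length es + snd r) + (card A0 + card V + nc V A0) + (card A1 + card V + nc V A1) + (card A2 + card V + nc V A2))"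
      by (simp only: power_add)
    ultimately show ?thesis unfolding sgs_def ncomp_nc V_def[symmetric] by simp
  qed
  finally show "sgs (Suc n) (insl n (DD A0 A1 A2) es) = (-1)^(length es + snd r) * sgs n A0 * sgs n A1 * sgs n A2"
    unfolding D_def .
qed




lemma sum_Pow_insert2: "finite E \<Longrightarrow> e \<notin> E \<Longrightarrow>
  (\<Sum>A\<in>Pow (insert e E). f A) = (\<Sum>A\<in>Pow E. f A + f (insert e A))"
  by (simp add: sum_Pow_insert sum.distrib)

lemma sum_Pow_Un:
  assumes "finite X" "finite Y" "X \<inter> Y = {}"
  shows "(\<Sum>D\<in>Pow (X \<union> Y). g D) = (\<Sum>B\<in>Pow X. \<Sum>C\<in>Pow Y. g (B \<union> C))"
  using assms(2,3,1)
proof (induction Y arbitrary: g rule: finite_induct)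
  case empty then show ?case by simp
next
  case (insert y Y g)
  have yn: "y \<notin> X \<union> Y" using insert by auto
  have fin: "finite (X \<union> Y)" using insert by auto
  have XY: "X \<inter> Y = {}" using insert.prems by auto
  have "(\<Sum>D\<in>Pow (X \<union> insert y Y). g D) = (\<Sum>D\<in>Pow (insert y (X \<union> Y)). g D)" by simp
  also have "\<dots> = (\<Sum>D\<in>Pow (X\<union>Y). g D) + (\<Sum>D\<in>Pow (X\<union>Y). g (insert y D))" by (rule sum_Pow_insert[OF fin yn])
  also have "\<dots> = (\<Sum>B\<in>Pow X. \<Sum>C\<in>Pow Y. g (B \<union> C)) + (\<Sum>B\<in>Pow X. \<Sum>C\<in>Pow Y. g (insert y (B \<union> C)))"
    using insert.IH[OF XY insert.prems(2), of g] insert.IH[OF XY insert.prems(2), of "\<lambda>D. g (insert y D)"] by simp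
  also have "\<dots> = (\<Sum>B\<in>Pow X. \<Sum>C\<in>Pow (insert y Y). g (B \<union> C))"
    by (simp add: sum_Pow_insert[OF insert.hyps(1,2)] sum.distrib)
  finally show ?case .
qed

lemma img_fun: "img i = image (image ((#) i))"
  by (rule ext) (simp add: img_def)

lemma sum_Pow_img: "(\<Sum>B\<in>Pow (img i E). g B) = (\<Sum>A\<in>Pow E. g (img i A))"
proof -
  have eq: "img i ` Pow E = Pow (img i E)"
    unfolding img_fun by (rule image_Pow_surj) simp
  have inj: "inj_on (img i) (Pow E)"
    unfolding img_fun by (rule inj_on_image_Pow[OF inj_image_Cons])
  show ?thesis unfolding eq[symmetric] by (rule sum.reindex[OF inj, unfolded comp_def])
qed

lemma img_disj: "i \<noteq> j \<Longrightarrow> (\<And>e. e\<in>A \<Longrightarrow> e \<noteq> {}) \<Longrightarrow> img i A \<inter> img j B = {}"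
proof (rule ccontr)
  assume ij: "i \<noteq> j" and ne: "\<And>e. e\<in>A \<Longrightarrow> e \<noteq> {}" and "img i A \<inter> img j B \<noteq> {}"
  then obtain e f where ef: "e \<in> A" "f \<in> B" "(#) i ` e = (#) j ` f" unfolding img_def by auto
  obtain x where "x \<in> e" using ne[OF ef(1)] by auto
  then have "i # x \<in> (#) j ` f" using ef by auto
  then show False using ij by auto
qed

lemma DD_eq: "DD A0 A1 A2 = img 0 A0 \<union> img 1 A1 \<union> img 2 A2"
  unfolding DD_def by auto

lemma W_Suc_sum:
  fixes n k :: nat
  defines "E \<equiv> sigma_edges n"
  defines "F \<equiv> (\<lambda>A. if bcode (Suc n) A = k then sgs (Suc n) A else 0)"
  shows "W (Suc n) k = (\<Sum>A0\<in>Pow E. \<Sum>A1\<in>Pow E. \<Sum>A2\<in>Pow E.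
            sum_list (map (\<lambda>es. F (insl n (DD A0 A1 A2) es)) ESL))"
proof -
  define Dall where "Dall = img 0 E \<union> img 1 E \<union> img 2 E"
  define c1 c2 c3 where "c1 = edge n (1,3)" and "c2 = edge n (2,6)" and "c3 = edge n (5,7)"
  have finE: "finite E" unfolding E_def by (rule finite_edges)
  have finD: "finite Dall" unfolding Dall_def img_def using finE by auto
  have neE: "\<And>e. e \<in> E \<Longrightarrow> e \<noteq> {}" unfolding E_def by (rule edges_nonempty)
  have nd: "c3 \<notin> Dall" "c2 \<notin> Dall" "c1 \<notin> Dall"
    unfolding Dall_def c1_def c2_def c3_def using edge_notin_img by auto
  have dist: "c1 \<noteq> c2" "c1 \<noteq> c3" "c2 \<noteq> c3"
    unfolding c1_def c2_def c3_def edge_def lab_def by (auto simp: doubleton_eq_iff)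
  have "W (Suc n) k = (\<Sum>A\<in>Pow (insert c1 (insert c2 (insert c3 Dall))). F A)"
    unfolding W_def F_def edges_Suc E_def Dall_def c1_def c2_def c3_def ..
  also have "\<dots> = (\<Sum>A\<in>Pow Dall. ((F A + F (insert c1 A)) + (F (insert c2 A) + F (insert c1 (insert c2 A))))
      + ((F (insert c3 A) + F (insert c1 (insert c3 A))) + (F (insert c2 (insert c3 A)) + F (insert c1 (insert c2 (insert c3 A))))))"
    using finD nd dist by (simp add: sum_Pow_insert2)
  also have "\<dots> = (\<Sum>D\<in>Pow Dall. sum_list (map (\<lambda>es. F (insl n D es)) ESL))"
    by (intro sum.cong refl) (simp add: ESL_def c1_def c2_def c3_def ac_simps)
  also have "\<dots> = (\<Sum>A0\<in>Pow E. \<Sum>A1\<in>Pow E. \<Sum>A2\<in>Pow E.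
            sum_list (map (\<lambda>es. F (insl n (DD A0 A1 A2) es)) ESL))"
  proof -
    have d1: "img 0 E \<inter> img 1 E = {}" by (rule img_disj) (use neE in auto)
    have d2: "(img 0 E \<union> img 1 E) \<inter> img 2 E = {}"
      using img_disj[of 0 2 E E] img_disj[of 1 2 E E] neE by auto
    have f: "finite (img i E)" for i unfolding img_def using finE by auto
    have f01: "finite (img 0 E \<union> img 1 E)" using f by simp
    show ?thesis unfolding Dall_def DD_eq
      by (simp only: sum_Pow_Un[OF f01 f d2] sum_Pow_Un[OF f f d1] sum_Pow_img)
  qed
  finally show ?thesis .
qed

lemma sum_list_factor:
  "(\<And>x. x \<in> set L \<Longrightarrow> f x = g x * S) \<Longrightarrow> sum_list (map f L) = sum_list (map g L) * (S::int)"
  by (induction L) (auto simp: algebra_simps)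

lemma inner_eq:
  assumes A: "A0 \<in> Pow (sigma_edges n)" "A1 \<in> Pow (sigma_edges n)" "A2 \<in> Pow (sigma_edges n)"
  shows "sum_list (map (\<lambda>es. (\<lambda>A. if bcode (Suc n) A = k then sgs (Suc n) A else 0) (insl n (DD A0 A1 A2) es)) ESL)
     = GG k (bcode n A0) (bcode n A1) (bcode n A2) * (sgs n A0 * sgs n A1 * sgs n A2)"
  unfolding GG_def
proof (rule sum_list_factor)
  fix es assume es: "es \<in> set ESL"
  have A': "A0 \<subseteq> sigma_edges n" "A1 \<subseteq> sigma_edges n" "A2 \<subseteq> sigma_edges n" using A by auto
  show "(if bcode (Suc n) (insl n (DD A0 A1 A2) es) = k then sgs (Suc n) (insl n (DD A0 A1 A2) es) else 0) =
    (let r = ufs (cl0 (bcode n A0) (bcode n A1) (bcode n A2)) es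
     in if ncode (fst r) = k then (- 1) ^ (length es + snd r) else 0) * (sgs n A0 * sgs n A1 * sgs n A2)"
    using FI[OF A' es] by (simp add: Let_def mult.assoc)
qed

lemma G1:
  assumes "finite X" "\<And>A. A \<in> X \<Longrightarrow> b A < (5::nat)"
  shows "(\<Sum>A\<in>X. f (b A) * s A) = (\<Sum>j<5. f j * (\<Sum>A\<in>X. if b A = j then s A else (0::int)))"
proof -
  have "(\<Sum>j<5. f j * (\<Sum>A\<in>X. if b A = j then s A else 0)) = (\<Sum>j<5. \<Sum>A\<in>X. if b A = j then f j * s A else 0)"
    unfolding sum_distrib_left by (intro sum.cong refl) simp
  also have "\<dots> = (\<Sum>A\<in>X. \<Sum>j<5. if b A = j then f j * s A else 0)"
    by (rule sum.swap)
  also have "\<dots> = (\<Sum>A\<in>X. f (b A) * s A)"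
  proof (rule sum.cong[OF refl])
    fix A assume "A \<in> X"
    then have "b A \<in> {..<5}" using assms(2) by auto
    then show "(\<Sum>j<5. if b A = j then f j * s A else 0) = f (b A) * s A"
      by (simp add: sum.delta)
  qed
  finally show ?thesis by simp
qed

lemma W_rec: "W (Suc n) k = PP k (W n)"
proof -
  define X where "X = Pow (sigma_edges n)"
  define b where "b = bcode n"
  define s where "s = sgs n"
  have finX: "finite X" unfolding X_def by (simp add: finite_edges)
  have bl: "\<And>A. A \<in> X \<Longrightarrow> b A < 5" unfolding b_def by (rule bcode_lt)
  have Wd: "W n j = (\<Sum>A\<in>X. if b A = j then s A else 0)" for j unfolding W_def X_def b_def s_def ..
  have "W (Suc n) k = (\<Sum>A0\<in>X. \<Sum>A1\<in>X. \<Sum>A2\<in>X. GG k (b A0) (b A1) (b A2) * s A0 * s A1 * s A2)"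
    unfolding W_Suc_sum X_def b_def s_def
    by (intro sum.cong refl) (simp add: inner_eq mult.assoc)
  also have "\<dots> = (\<Sum>A0\<in>X. \<Sum>A1\<in>X. \<Sum>k2<5. GG k (b A0) (b A1) k2 * s A0 * s A1 * W n k2)"
  proof (intro sum.cong refl)
    fix A0 A1
    show "(\<Sum>A2\<in>X. GG k (b A0) (b A1) (b A2) * s A0 * s A1 * s A2) = (\<Sum>k2<5. GG k (b A0) (b A1) k2 * s A0 * s A1 * W n k2)"
      using G1[OF finX bl, where f="\<lambda>j. GG k (b A0) (b A1) j * s A0 * s A1" and s=s] unfolding Wd by simp
  qed
  also have "\<dots> = (\<Sum>A0\<in>X. \<Sum>k2<5. \<Sum>k1<5. GG k (b A0) k1 k2 * s A0 * W n k1 * W n k2)"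
  proof (intro sum.cong refl)
    fix A0
    have "(\<Sum>A1\<in>X. \<Sum>k2<5. GG k (b A0) (b A1) k2 * s A0 * s A1 * W n k2)
        = (\<Sum>k2<5. \<Sum>A1\<in>X. (GG k (b A0) (b A1) k2 * s A0 * W n k2) * s A1)"
      by (subst sum.swap) (simp add: mult_ac)
    also have "\<dots> = (\<Sum>k2<5. \<Sum>k1<5. GG k (b A0) k1 k2 * s A0 * W n k1 * W n k2)"
    proof (intro sum.cong refl)
      fix k2
      show "(\<Sum>A1\<in>X. (GG k (b A0) (b A1) k2 * s A0 * W n k2) * s A1) = (\<Sum>k1<5. GG k (b A0) k1 k2 * s A0 * W n k1 * W n k2)"
        using G1[OF finX bl, where f="\<lambda>j. GG k (b A0) j k2 * s A0 * W n k2" and s=s] unfolding Wd by (simp add: mult_ac)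
    qed
    finally show "(\<Sum>A1\<in>X. \<Sum>k2<5. GG k (b A0) (b A1) k2 * s A0 * s A1 * W n k2)
        = (\<Sum>k2<5. \<Sum>k1<5. GG k (b A0) k1 k2 * s A0 * W n k1 * W n k2)" .
  qed
  also have "\<dots> = (\<Sum>k2<5. \<Sum>k1<5. \<Sum>k0<5. GG k k0 k1 k2 * W n k0 * W n k1 * W n k2)"
  proof -
    have "(\<Sum>A0\<in>X. \<Sum>k2<5. \<Sum>k1<5. GG k (b A0) k1 k2 * s A0 * W n k1 * W n k2)
        = (\<Sum>k2<5. \<Sum>k1<5. \<Sum>A0\<in>X. (GG k (b A0) k1 k2 * W n k1 * W n k2) * s A0)"
      by (subst sum.swap) (simp add: sum.swap[of _ X] mult_ac)
    also have "\<dots> = (\<Sum>k2<5. \<Sum>k1<5. \<Sum>k0<5. GG k k0 k1 k2 * W n k0 * W n k1 * W n k2)"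
    proof (intro sum.cong refl)
      fix k1 k2
      show "(\<Sum>A0\<in>X. (GG k (b A0) k1 k2 * W n k1 * W n k2) * s A0) = (\<Sum>k0<5. GG k k0 k1 k2 * W n k0 * W n k1 * W n k2)"
        using G1[OF finX bl, where f="\<lambda>j. GG k j k1 k2 * W n k1 * W n k2" and s=s] unfolding Wd by (simp add: mult_ac)
    qed
    finally show ?thesis .
  qed
  also have "\<dots> = PP k (W n)"
    unfolding PP_def by (subst sum.swap) (subst (2) sum.swap, subst sum.swap, rule refl)
  finally show ?thesis .
qed

lemma W0: "W 0 k = (if k = 0 then 1 else 0)"
proof -
  have b: "bcode 0 {} = 0" unfolding bcode_def code_def top_v_def left_v_def right_v_def by simp
  have nc0: "ncomp 0 {} = 1" unfolding ncomp_def verts_0 by simp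
  have s: "sgs 0 {} = 1" unfolding sgs_def nc0 verts_0 by simp
  show ?thesis unfolding W_def using b s by simp
qed

lemma W_sym: "W n 2 = W n 1 \<and> W n 3 = W n 1"
proof (induction n)
  case 0 then show ?case by (simp add: W0)
next
  case (Suc n)
  then show ?case unfolding W_rec using PP_all(3,4)[of "W n" "W n 1"] by simp
qed

lemma AO_eq: "acyclic_orientations n = AO (sigma_edges n) id"
  unfolding acyclic_orientations_def AO_def orients_def relR_def mapr_id by auto

lemma SS_eq: "SS (sigma_edges n) id (sigma_verts n) = (\<Sum>A\<in>Pow (sigma_edges n). sgs n A)"
proof -
  have "kk id (sigma_verts n) A = ncomp n A" for A
    unfolding kk_def ncomp_def mapr_id conn_rel by simp
  then show ?thesis unfolding SS_def sgs_def by simp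
qed

lemma card_AO: "int (card (acyclic_orientations n)) = (\<Sum>A\<in>Pow (sigma_edges n). sgs n A)"
  unfolding AO_eq SS_eq[symmetric] by (rule stanley[OF finite_verts finite_edges edges_prop])

lemma minus_one_powi: "(-1::real) powi (int a - (int b - int c)) = (-1)^(a+b+c)"
proof -
  have "even (int a - (int b - int c)) \<longleftrightarrow> even (a+b+c)" by (simp add: even_diff) blast
  then show ?thesis by (simp add: power_int_minus_left minus_one_power_iff)
qed

lemma weight_eq: "weight n A 2 0 = of_int (sgs n A)"
  unfolding weight_def sgs_def nul_def rk_def by (simp add: minus_one_powi)

lemma sum_sgs: "(\<Sum>A\<in>Pow (sigma_edges n). sgs n A) = (\<Sum>k<5. W n k)"
proof -
  have "(\<Sum>k<5. W n k) = (\<Sum>A\<in>Pow (sigma_edges n). \<Sum>k<5. if bcode n A = k then sgs n A else 0)"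
    unfolding W_def by (rule sum.swap)
  also have "\<dots> = (\<Sum>A\<in>Pow (sigma_edges n). sgs n A)"
    using bcode_lt by (intro sum.cong refl) (simp add: sum.delta)
  finally show ?thesis by simp
qed

lemma Hr: "Hpoly n 2 0 = of_int (\<Sum>A\<in>Pow (sigma_edges n). sgs n A)"
  unfolding Hpoly_def weight_eq by simp

lemma filt: "(\<Sum>A\<in>{A\<in>Pow (sigma_edges n). P A}. weight n A 2 0) = of_int (\<Sum>A\<in>Pow (sigma_edges n). if P A then sgs n A else 0)"
proof -
  have "(\<Sum>A\<in>{A\<in>Pow (sigma_edges n). P A}. weight n A 2 0) = (\<Sum>A\<in>Pow (sigma_edges n). if P A then weight n A 2 0 else 0)"
    by (rule sum.inter_filter) (simp add: finite_edges)
  also have "\<dots> = (\<Sum>A\<in>Pow (sigma_edges n). of_int (if P A then sgs n A else 0))"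
    by (intro sum.cong refl) (simp add: weight_eq)
  finally show ?thesis by (simp only: of_int_sum)
qed

lemma H2r: "H2poly n 2 0 = of_int (W n 0)"
  unfolding H2poly_def filt W_def bcode_def code_def by (intro arg_cong[where f=of_int] sum.cong refl) auto

lemma Nr: "Npoly n 2 0 = of_int (W n 1)"
proof -
  have "H1poly n 2 0 = of_int (W n 1)"
    unfolding H1poly_def filt W_def bcode_def code_def by (intro arg_cong[where f=of_int] sum.cong refl) auto
  then show ?thesis unfolding Npoly_def by simp
qed

lemma Mr: "Mpoly n 2 0 = of_int (W n 4)"
proof -
  have "H0poly n 2 0 = of_int (W n 4)"
    unfolding H0poly_def filt W_def bcode_def code_def by (intro arg_cong[where f=of_int] sum.cong refl) auto
  then show ?thesis unfolding Mpoly_def by simp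
qed

lemma sum5': "(\<Sum>k<(5::nat). f k) = f 0 + f 1 + f 2 + f 3 + (f 4 :: int)"
  by (simp add: numeral_eq_Suc lessThan_Suc add.commute add.left_commute)

lemma Hfull: "Hpoly n 2 0 = of_int (W n 0 + 3 * W n 1 + W n 4)"
  unfolding Hr sum_sgs sum5' using W_sym[of n] by simp

theorem proposition4p11:
  fixes n :: nat
  assumes "n \<ge> 1"
  shows "real (card (acyclic_orientations n)) = Hpoly n 2 0
    \<and> Hpoly n 2 0 = H2poly n 2 0 + 3 * Npoly n 2 0 + Mpoly n 2 0
    \<and> Hpoly (n + 1) 2 0 = (2 * Hpoly n 2 0) ^ 3 - 2 * (H2poly n 2 0 + Npoly n 2 0) ^ 3
    \<and> (let H2 = H2poly n 2 0; N = Npoly n 2 0; M = Mpoly n 2 0 in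
         H2poly (n + 1) 2 0 = 2 * H2^3 + 12 * H2^2 * N + 6 * H2 * N^2
       \<and> Npoly (n + 1) 2 0 = H2^3 + 11 * H2^2 * N + 4 * H2^2 * M + 28 * H2 * N^2
            + 8 * H2 * N * M + 14 * N^3 + 4 * N^2 * M
       \<and> Mpoly (n + 1) 2 0 = H2^3 + 21 * H2^2 * N + 12 * H2^2 * M + 120 * H2 * N^2
            + 120 * H2 * N * M + 24 * H2 * M^2 + 172 * N^3 + 204 * N^2 * M
            + 72 * N * M^2 + 8 * M^3)
    \<and> H2poly 1 2 0 = 2 \<and> Npoly 1 2 0 = 1 \<and> Mpoly 1 2 0 = 1"
proof -
  note sy = W_sym[of n]
  have P: "PP 0 (W n) = 2 * W n 0^3 + 12 * W n 0^2 * W n 1 + 6 * W n 0 * W n 1^2"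
    "PP 1 (W n) = W n 0^3 + 11 * W n 0^2 * W n 1 + 4 * W n 0^2 * W n 4 + 28 * W n 0 * W n 1^2
            + 8 * W n 0 * W n 1 * W n 4 + 14 * W n 1^3 + 4 * W n 1^2 * W n 4"
    "PP 4 (W n) = W n 0^3 + 21 * W n 0^2 * W n 1 + 12 * W n 0^2 * W n 4 + 120 * W n 0 * W n 1^2
            + 120 * W n 0 * W n 1 * W n 4 + 24 * W n 0 * W n 4^2 + 172 * W n 1^3 + 204 * W n 1^2 * W n 4
            + 72 * W n 1 * W n 4^2 + 8 * W n 4^3"
    using PP_all[of "W n" "W n 1"] sy by auto
  have c1: "real (card (acyclic_orientations n)) = Hpoly n 2 0"
    unfolding Hr card_AO[symmetric] by simp
  have c2: "Hpoly n 2 0 = H2poly n 2 0 + 3 * Npoly n 2 0 + Mpoly n 2 0"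
    unfolding Hfull H2r Nr Mr by simp
  have r0: "W (Suc n) 0 = 2 * W n 0^3 + 12 * W n 0^2 * W n 1 + 6 * W n 0 * W n 1^2"
    using P unfolding W_rec by simp
  have r1: "W (Suc n) 1 = W n 0^3 + 11 * W n 0^2 * W n 1 + 4 * W n 0^2 * W n 4 + 28 * W n 0 * W n 1^2
            + 8 * W n 0 * W n 1 * W n 4 + 14 * W n 1^3 + 4 * W n 1^2 * W n 4"
    using P unfolding W_rec by simp
  have r4: "W (Suc n) 4 = W n 0^3 + 21 * W n 0^2 * W n 1 + 12 * W n 0^2 * W n 4 + 120 * W n 0 * W n 1^2
            + 120 * W n 0 * W n 1 * W n 4 + 24 * W n 0 * W n 4^2 + 172 * W n 1^3 + 204 * W n 1^2 * W n 4
            + 72 * W n 1 * W n 4^2 + 8 * W n 4^3"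
    using P unfolding W_rec by simp
  have c3: "Hpoly (n + 1) 2 0 = (2 * Hpoly n 2 0) ^ 3 - 2 * (H2poly n 2 0 + Npoly n 2 0) ^ 3"
  proof -
    have "W (Suc n) 0 + 3 * W (Suc n) 1 + W (Suc n) 4 = (2 * (W n 0 + 3 * W n 1 + W n 4))^3 - 2 * (W n 0 + W n 1)^3"
      unfolding r0 r1 r4 by (simp add: algebra_simps power2_eq_square power3_eq_cube)
    then show ?thesis unfolding Hfull H2r Nr Suc_eq_plus1[symmetric]
      by (metis (mono_tags) of_int_add of_int_diff of_int_mult of_int_numeral of_int_power)
  qed
  have c4: "let H2 = H2poly n 2 0; N = Npoly n 2 0; M = Mpoly n 2 0 in
         H2poly (n + 1) 2 0 = 2 * H2^3 + 12 * H2^2 * N + 6 * H2 * N^2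
       \<and> Npoly (n + 1) 2 0 = H2^3 + 11 * H2^2 * N + 4 * H2^2 * M + 28 * H2 * N^2
            + 8 * H2 * N * M + 14 * N^3 + 4 * N^2 * M
       \<and> Mpoly (n + 1) 2 0 = H2^3 + 21 * H2^2 * N + 12 * H2^2 * M + 120 * H2 * N^2
            + 120 * H2 * N * M + 24 * H2 * M^2 + 172 * N^3 + 204 * N^2 * M
            + 72 * N * M^2 + 8 * M^3"
    unfolding Let_def H2r Nr Mr Suc_eq_plus1[symmetric] r0 r1 r4 by simp
  have w1: "W 1 0 = 2" "W 1 1 = 1" "W 1 4 = 1"
    using PP_all[of "W 0" 0] W_rec[of 0] by (simp_all add: W0)
  have c5: "H2poly 1 2 0 = 2 \<and> Npoly 1 2 0 = 1 \<and> Mpoly 1 2 0 = 1"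
    unfolding H2r Nr Mr w1 by simp
  show ?thesis using c1 c2 c3 c4 c5 by blast
qed


end
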